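(* Let $1\le N<L$, $m\ge1$, integers $k_\ell,a_\ell$ and reals $t_\ell\ge0$, and nonzero complex $z_1,\dots,z_m$ with $0<|z_m|<\cdots<|z_1|$. Then $$\sum_{Y\in\mathcal Y_N(L)}\mathcal D_Y(\mathbf z;\mathbf k)=\mathcal D_{\rm step}(\mathbf z;\mathbf k^+)-(-1)^{N-1}z_1^{-L}\mathcal D_{\rm step}(\mathbf z;\mathbf k),$$ where $\mathbf k=(k_1,\dots,k_m)$, $\mathbf k^+=(k_1+1,\dots,k_m+1)$, and $\mathcal D_{\rm step}$ is $\mathcal D_Y$ for $Y=(-N+1,\dots,-1,0)$.
   Context: $\mathcal Y_N(L)=\{(y_1,\dots,y_N)\in\mathbb Z^N:-L+1\le y_1<\cdots<y_N\le0\}$; $\rho=N/L$. Let $\mathcal S_z$ be the set of roots of $w^N(w+1)^{L-N}=z^L$. With $k_0=a_0=t_0=0$, $\mathrm G_\ell(w)=\frac{w(w+1)}{L(w+\rho)}\frac{w^{-k_\ell}(w+1)^{-a_\ell+k_\ell}e^{t_\ell w}}{w^{-k_{\ell-1}}(w+1)^{-a_{\ell-1}+k_{\ell-1}}e^{t_{\ell-1}w}}$, and $$\mathcal D_Y(\mathbf z;\mathbf k)=\det\Big[\sum_{w_1\in\mathcal S_{z_1},\dots,w_m\in\mathcal S_{z_m}}\frac{w_1^i(w_1+1)^{y_i-i}w_m^{-j}}{\prod_{\ell=2}^m(w_\ell-w_{\ell-1})}\prod_{\ell=1}^m\mathrm G_\ell(w_\ell)\Big]_{i,j=1}^N.$$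 *)

theory Defs
  imports "HOL-Analysis.Analysis" "HOL-Library.FuncSet" "Jordan_Normal_Form.Determinant"
begin

definition YN :: "nat \<Rightarrow> nat \<Rightarrow> int list set" where
  "YN N L = {ys. length ys = N \<and> sorted_wrt (<) ys \<and>
                 (\<forall>y\<in>set ys. - int L + 1 \<le> y \<and> y \<le> 0)}"

definition Ystep :: "nat \<Rightarrow> int list" where
  "Ystep N = map (\<lambda>i. int i - int N) [1..<N+1]"

definition Sroots :: "nat \<Rightarrow> nat \<Rightarrow> complex \<Rightarrow> complex set" where
  "Sroots N L z = {w. w ^ N * (w + 1) ^ (L - N) = z ^ L}"

text \<open>Convention k_0 = a_0 = t_0 = 0: sequences indexed by 1..m, extended by 0 at index 0.\<close>
definition ext0 :: "(nat \<Rightarrow> 'a::zero) \<Rightarrow> nat \<Rightarrow> 'a" where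
  "ext0 f l = (if l = 0 then 0 else f l)"

definition Gfun :: "nat \<Rightarrow> nat \<Rightarrow> (nat \<Rightarrow> int) \<Rightarrow> (nat \<Rightarrow> int) \<Rightarrow> (nat \<Rightarrow> real)
                    \<Rightarrow> nat \<Rightarrow> complex \<Rightarrow> complex" where
  "Gfun N L k a t l w =
     (let \<rho> = of_nat N / of_nat L :: complex;
          kk = ext0 k; aa = ext0 a; tt = ext0 t
      in w * (w + 1) / (of_nat L * (w + \<rho>)) *
         (w powi (- kk l) * (w + 1) powi (- aa l + kk l) * exp (complex_of_real (tt l) * w)) /
         (w powi (- kk (l - 1)) * (w + 1) powi (- aa (l - 1) + kk (l - 1))
            * exp (complex_of_real (tt (l - 1)) * w)))"

definition DY :: "nat \<Rightarrow> nat \<Rightarrow> nat \<Rightarrow> (nat \<Rightarrow> complex) \<Rightarrow> (nat \<Rightarrow> int) \<Rightarrow> (nat \<Rightarrow> int)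
                  \<Rightarrow> (nat \<Rightarrow> real) \<Rightarrow> int list \<Rightarrow> complex" where
  "DY N L m z k a t Y =
     det (mat N N (\<lambda>(i0, j0).
       let i = i0 + 1; j = j0 + 1 in
       (\<Sum>w\<in>(\<Pi>\<^sub>E l\<in>{1..m}. Sroots N L (z l)).
          w 1 ^ i * (w 1 + 1) powi (Y ! (i - 1) - int i) * w m powi (- int j)
          / (\<Prod>l\<in>{2..m}. w l - w (l - 1))
          * (\<Prod>l\<in>{1..m}. Gfun N L k a t l (w l)))))"

end

theory Submission imports Defs begin

definition Dt :: "nat \<Rightarrow> (nat \<Rightarrow> complex) list \<Rightarrow> complex" where
  "Dt n rs = det (mat n n (\<lambda>(i,j). (rs!i) j))"

definition Cf :: "nat \<Rightarrow> (nat \<Rightarrow> complex) list \<Rightarrow> (nat \<Rightarrow> complex) list \<Rightarrow> (nat \<Rightarrow> nat) \<Rightarrow> complex" where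
  "Cf n P S p = signof p * (\<Prod>i\<in>{0..<n}-{length P}. ((P @ (\<lambda>_. 0) # S)!i) (p i))"

lemma nth_mid: "i \<noteq> length P \<Longrightarrow> (P @ r # S)!i = (P @ r' # S)!i"
  by (auto simp: nth_append split: nat.split)

lemma Dt_row:
  assumes "length P + 1 + length S = n"
  shows "Dt n (P @ r # S) = (\<Sum>p\<in>{p. p permutes {0..<n}}. r (p (length P)) * Cf n P S p)"
proof -
  have "Dt n (P @ r # S) = (\<Sum>p\<in>{p. p permutes {0..<n}}.
      signof p * (\<Prod>i = 0..<n. mat n n (\<lambda>(i,j). ((P @ r # S)!i) j) $$ (i, p i)))"
    unfolding Dt_def by (rule det_def', simp)
  also have "\<dots> = (\<Sum>p\<in>{p. p permutes {0..<n}}. r (p (length P)) * Cf n P S p)"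
  proof (rule sum.cong[OF refl])
    fix p assume "p \<in> {p. p permutes {0..<n}}"
    hence p: "p permutes {0..<n}" by simp
    have pi: "i < n \<Longrightarrow> p i < n" for i using p by (simp add: permutes_in_image)
    have k: "length P \<in> {0..<n}" using assms by simp
    have "(\<Prod>i = 0..<n. mat n n (\<lambda>(i,j). ((P @ r # S)!i) j) $$ (i, p i))
        = (\<Prod>i = 0..<n. ((P @ r # S)!i) (p i))"
      by (rule prod.cong, auto simp: pi)
    also have "\<dots> = ((P @ r # S)!(length P)) (p (length P)) *
        (\<Prod>i\<in>{0..<n}-{length P}. ((P @ r # S)!i) (p i))"
      by (rule prod.remove[OF _ k], simp)
    also have "(\<Prod>i\<in>{0..<n}-{length P}. ((P @ r # S)!i) (p i)) =
        (\<Prod>i\<in>{0..<n}-{length P}. ((P @ (\<lambda>_. 0) # S)!i) (p i))"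
      by (rule prod.cong[OF refl], subst nth_mid[of _ P r S "\<lambda>_. 0"], auto)
    finally show "signof p * (\<Prod>i = 0..<n. mat n n (\<lambda>(i,j). ((P @ r # S)!i) j) $$ (i, p i))
       = r (p (length P)) * Cf n P S p"
      by (simp add: Cf_def)
  qed
  finally show ?thesis .
qed

lemma Dt_add:
  assumes "length P + 1 + length S = n"
  shows "Dt n (P @ (\<lambda>j. a j + b j) # S) = Dt n (P @ a # S) + Dt n (P @ b # S)"
  unfolding Dt_row[OF assms] by (simp add: distrib_right sum.distrib)

lemma Dt_diff:
  assumes "length P + 1 + length S = n"
  shows "Dt n (P @ (\<lambda>j. a j - b j) # S) = Dt n (P @ a # S) - Dt n (P @ b # S)"
  unfolding Dt_row[OF assms] by (simp add: left_diff_distrib sum_subtractf)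

lemma Dt_scale:
  assumes "length P + 1 + length S = n"
  shows "Dt n (P @ (\<lambda>j. c * a j) # S) = c * Dt n (P @ a # S)"
  unfolding Dt_row[OF assms] by (simp add: sum_distrib_left mult.assoc)

lemma Dt_sum:
  assumes "length P + 1 + length S = n"
  shows "Dt n (P @ (\<lambda>j. \<Sum>x\<in>A. f x j) # S) = (\<Sum>x\<in>A. Dt n (P @ f x # S))"
  unfolding Dt_row[OF assms] by (simp add: sum_distrib_right sum.swap[of _ A])

lemma Dt_ident:
  assumes "length P + 2 + length S = n"
  shows "Dt n (P @ a # a # S) = 0"
  unfolding Dt_def
proof (rule det_identical_rows[of _ n "length P" "Suc (length P)"])
  show "row (mat n n (\<lambda>(i, j). ((P @ a # a # S) ! i) j)) (length P) =
        row (mat n n (\<lambda>(i, j). ((P @ a # a # S) ! i) j)) (Suc (length P))"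
    using assms by (auto simp: nth_append)
qed (use assms in auto)

lemma Dt_swap:
  assumes "length P + 2 + length S = n"
  shows "Dt n (P @ a # b # S) = - Dt n (P @ b # a # S)"
proof -
  have l1: "length P + 1 + length (c # S) = n" for c :: "nat \<Rightarrow> complex" using assms by simp
  have l2: "length (P @ [c]) + 1 + length S = n" for c :: "nat \<Rightarrow> complex" using assms by simp
  have "0 = Dt n (P @ (\<lambda>j. a j + b j) # (\<lambda>j. a j + b j) # S)"
    using Dt_ident[OF assms] by simp
  also have "\<dots> = Dt n (P @ a # a # S) + Dt n (P @ a # b # S) + Dt n (P @ b # a # S) + Dt n (P @ b # b # S)"
    using Dt_add[OF l1] Dt_add[OF l2, of _ a b] by simp
  finally show ?thesis using Dt_ident[OF assms] by (simp add: eq_neg_iff_add_eq_0 add.commute)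
qed

lemma Dt_addnext1:
  assumes "length P + 2 + length S = n"
  shows "Dt n (P @ (\<lambda>j. a j + c * b j) # b # S) = Dt n (P @ a # b # S)"
proof -
  have l1: "length P + 1 + length (b # S) = n" using assms by simp
  show ?thesis using Dt_add[OF l1, of a "\<lambda>j. c * b j"] Dt_scale[OF l1, of c b] Dt_ident[OF assms]
    by simp
qed

lemma Dt_addnext2:
  assumes "length P + 2 + length S = n"
  shows "Dt n (P @ a # (\<lambda>j. b j + c * a j) # S) = Dt n (P @ a # b # S)"
proof -
  have l2: "length (P @ [a]) + 1 + length S = n" using assms by simp
  show ?thesis using Dt_add[OF l2, of b "\<lambda>j. c * a j"] Dt_scale[OF l2, of c a] Dt_ident[OF assms]
    by simp
qed

lemma Dt_move:
  assumes "length P + 1 + length Q + length S = n"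
  shows "Dt n (P @ a # Q @ S) = (-1) ^ length Q * Dt n (P @ Q @ a # S)"
  using assms
proof (induction Q arbitrary: P)
  case Nil thus ?case by simp
next
  case (Cons q Q)
  have "Dt n (P @ a # q # Q @ S) = - Dt n (P @ q # a # Q @ S)"
    by (rule Dt_swap, use Cons.prems in simp)
  also have "Dt n (P @ q # a # Q @ S) = Dt n ((P @ [q]) @ a # Q @ S)" by simp
  also have "\<dots> = (-1) ^ length Q * Dt n ((P @ [q]) @ Q @ a # S)"
    by (rule Cons.IH, use Cons.prems in simp)
  finally show ?case by simp
qed

fun rowsR :: "(nat \<Rightarrow> int \<Rightarrow> nat \<Rightarrow> complex) \<Rightarrow> nat \<Rightarrow> int list \<Rightarrow> (nat \<Rightarrow> complex) list" where
  "rowsR R s [] = []"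
| "rowsR R s (y # ys) = R (Suc s) y # rowsR R (Suc s) ys"

fun stair :: "(nat \<Rightarrow> int \<Rightarrow> nat \<Rightarrow> complex) \<Rightarrow> nat \<Rightarrow> int \<Rightarrow> nat \<Rightarrow> (nat \<Rightarrow> complex) list" where
  "stair R s c 0 = []"
| "stair R s c (Suc n) = R s c # stair R (Suc s) (c + 1) n"

lemma length_rowsR[simp]: "length (rowsR R s ys) = length ys"
  by (induction ys arbitrary: s) auto

lemma length_stair[simp]: "length (stair R s c n) = n"
  by (induction n arbitrary: s c) auto

lemma nth_rowsR: "i < length ys \<Longrightarrow> rowsR R s ys ! i = R (s + Suc i) (ys ! i)"
  by (induction ys arbitrary: s i) (auto simp: nth_Cons split: nat.split)

lemma nth_stair: "i < n \<Longrightarrow> stair R s c n ! i = R (s + i) (c + int i)"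
  by (induction n arbitrary: s c i) (auto simp: nth_Cons algebra_simps split: nat.split)

lemma stair_snoc: "stair R s c (Suc n) = stair R s c n @ [R (s + n) (c + int n)]"
proof (induction n arbitrary: s c)
  case 0 thus ?case by simp
next
  case (Suc n)
  have "stair R s c (Suc (Suc n)) = R s c # stair R (Suc s) (c+1) (Suc n)" by (simp only: stair.simps)
  also have "\<dots> = R s c # (stair R (Suc s) (c+1) n @ [R (Suc s + n) (c + 1 + int n)])"
    by (simp only: Suc.IH[of "Suc s" "c+1"])
  also have "\<dots> = stair R s c (Suc n) @ [R (s + Suc n) (c + int (Suc n))]"
    by (simp add: algebra_simps)
  finally show ?case .
qed

definition SL :: "nat \<Rightarrow> int \<Rightarrow> int \<Rightarrow> int list set" where
  "SL n lo hi = {ys. length ys = n \<and> sorted_wrt (<) ys \<and> set ys \<subseteq> {lo..hi}}"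

lemma finite_SL: "finite (SL n lo hi)"
proof -
  have "SL n lo hi \<subseteq> {ys. set ys \<subseteq> {lo..hi} \<and> length ys = n}" unfolding SL_def by auto
  moreover have "finite {ys. set ys \<subseteq> {lo..hi} \<and> length ys = n}"
    by (rule finite_lists_length_eq) simp
  ultimately show ?thesis by (rule finite_subset)
qed

lemma SL_0: "SL 0 lo hi = {[]}" unfolding SL_def by auto

lemma SL_Suc: "SL (Suc n) lo hi = (\<lambda>(y, ys). y # ys) ` (SIGMA y:{lo..hi}. SL n (y + 1) hi)"
proof -
  { fix xs
  have "xs \<in> SL (Suc n) lo hi \<longleftrightarrow> xs \<in> (\<lambda>(y, ys). y # ys) ` (SIGMA y:{lo..hi}. SL n (y + 1) hi)"
  proof (cases xs)
    case Nil thus ?thesis by (auto simp: SL_def)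
  next
    case (Cons y ys)
    have "y # ys \<in> SL (Suc n) lo hi \<longleftrightarrow> y \<in> {lo..hi} \<and> ys \<in> SL n (y + 1) hi"
      unfolding SL_def by fastforce
    thus ?thesis using Cons by auto
  qed }
  thus ?thesis by blast
qed

lemma sum_SL_Suc:
  "(\<Sum>ys\<in>SL (Suc n) lo hi. f ys) = (\<Sum>y\<in>{lo..hi}. \<Sum>ys\<in>SL n (y + 1) hi. f (y # ys))"
proof -
  have inj: "inj_on (\<lambda>(y, ys). y # ys) (SIGMA y:{lo..hi}. SL n (y + 1) hi)"
    by (auto simp: inj_on_def)
  have "(\<Sum>ys\<in>SL (Suc n) lo hi. f ys) = (\<Sum>p\<in>(SIGMA y:{lo..hi}. SL n (y + 1) hi). f (case p of (y, ys) \<Rightarrow> y # ys))"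
    unfolding SL_Suc by (subst sum.reindex[OF inj]) (simp add: comp_def)
  also have "\<dots> = (\<Sum>(y, ys)\<in>(SIGMA y:{lo..hi}. SL n (y + 1) hi). f (y # ys))"
    by (rule sum.cong) auto
  also have "\<dots> = (\<Sum>y\<in>{lo..hi}. \<Sum>ys\<in>SL n (y + 1) hi. f (y # ys))"
    by (rule sum.Sigma[symmetric]) (auto simp: finite_SL)
  finally show ?thesis .
qed

lemma SL_empty:
  assumes "hi - lo + 1 < int n" "lo \<le> hi + 1" shows "SL n lo hi = {}"
proof (rule ccontr)
  assume "SL n lo hi \<noteq> {}"
  then obtain ys where ys: "length ys = n" "sorted_wrt (<) ys" "set ys \<subseteq> {lo..hi}"
    unfolding SL_def by auto
  have "distinct ys" using ys(2) by (simp add: strict_sorted_iff)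
  hence "n = card (set ys)" using ys(1) by (simp add: distinct_card)
  also have "\<dots> \<le> card {lo..hi}" by (rule card_mono[OF _ ys(3)]) simp
  also have "\<dots> = nat (hi - lo + 1)" by simp
  finally have "n \<le> nat (hi - lo + 1)" .
  hence "int n \<le> hi - lo + 1" using assms(2) by (simp add: le_nat_iff)
  thus False using assms(1) by linarith
qed

lemma telescope:
  fixes R :: "nat \<Rightarrow> int \<Rightarrow> nat \<Rightarrow> complex" and lo c :: int
  assumes rec: "\<And>i y j. R i y j = R i (y - 1) j + R (Suc i) y j"
    and "lo - 1 \<le> c"
  shows "(\<Sum>y\<in>{lo..c}. R (Suc s) y j) = R s c j - R s (lo - 1) j"
  using assms(2)
proof (induction c rule: int_ge_induct)
  case base thus ?case by simp
next
  case (step c)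
  have "{lo..c+1} = insert (c+1) {lo..c}" using step.hyps by auto
  hence "(\<Sum>y\<in>{lo..c+1}. R (Suc s) y j) = R (Suc s) (c+1) j + (\<Sum>y\<in>{lo..c}. R (Suc s) y j)"
    by simp
  also have "\<dots> = R s (c+1) j - R s (lo - 1) j"
    using step.IH rec[of s "c+1" j] by simp
  finally show ?case .
qed

lemma main_claim:
  fixes R :: "nat \<Rightarrow> int \<Rightarrow> nat \<Rightarrow> complex" and lo c :: int
  assumes rec: "\<And>i y j. R i y j = R i (y - 1) j + R (Suc i) y j"
  shows "lo \<le> c + 1 \<Longrightarrow> length P + Suc n + length S = N \<Longrightarrow>
    (\<Sum>ys\<in>SL (Suc n) lo (c + int n). Dt N (P @ rowsR R s ys @ S))
      = Dt N (P @ (\<lambda>j. R s c j - R s (lo - 1) j) # stair R (Suc s) (c + 1) n @ S)"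
proof (induction n arbitrary: P s lo c)
  case 0
  have l: "length P + 1 + length S = N" using 0 by simp
  have "(\<Sum>ys\<in>SL (Suc 0) lo (c + int 0). Dt N (P @ rowsR R s ys @ S))
      = (\<Sum>y\<in>{lo..c}. Dt N (P @ R (Suc s) y # S))"
    by (simp add: sum_SL_Suc SL_0)
  also have "\<dots> = Dt N (P @ (\<lambda>j. \<Sum>y\<in>{lo..c}. R (Suc s) y j) # S)"
    by (rule Dt_sum[OF l, symmetric])
  also have "(\<lambda>j. \<Sum>y\<in>{lo..c}. R (Suc s) y j) = (\<lambda>j. R s c j - R s (lo - 1) j)"
    using telescope[where R=R, OF rec, of lo c s] 0 by auto
  finally show ?case by simp
next
  case (Suc n)
  let ?hi = "c + int (Suc n)"
  have l: "length P + 1 + length (stair R (Suc s) (c + 1) (Suc n) @ S) = N" using Suc.prems by simp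
  have dj: "{lo..?hi} = {lo..c+1} \<union> {c+2..?hi}" "{lo..c+1} \<inter> {c+2..?hi} = {}" using Suc.prems by auto
  have "(\<Sum>ys\<in>SL (Suc (Suc n)) lo ?hi. Dt N (P @ rowsR R s ys @ S))
     = (\<Sum>y\<in>{lo..?hi}. \<Sum>ys\<in>SL (Suc n) (y + 1) ?hi. Dt N (P @ R (Suc s) y # rowsR R (Suc s) ys @ S))"
    by (simp add: sum_SL_Suc)
  also have "\<dots> = (\<Sum>y\<in>{lo..c+1}. \<Sum>ys\<in>SL (Suc n) (y + 1) ?hi. Dt N (P @ R (Suc s) y # rowsR R (Suc s) ys @ S))
     + (\<Sum>y\<in>{c+2..?hi}. \<Sum>ys\<in>SL (Suc n) (y + 1) ?hi. Dt N (P @ R (Suc s) y # rowsR R (Suc s) ys @ S))"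
    unfolding dj(1) by (rule sum.union_disjoint) (use dj(2) in auto)
  also have "(\<Sum>y\<in>{c+2..?hi}. \<Sum>ys\<in>SL (Suc n) (y + 1) ?hi. Dt N (P @ R (Suc s) y # rowsR R (Suc s) ys @ S)) = 0"
  proof (rule sum.neutral, rule ballI)
    fix y assume "y \<in> {c+2..?hi}"
    hence "SL (Suc n) (y + 1) ?hi = {}" by (intro SL_empty) auto
    thus "(\<Sum>ys\<in>SL (Suc n) (y + 1) ?hi. Dt N (P @ R (Suc s) y # rowsR R (Suc s) ys @ S)) = 0" by simp
  qed
  also have "(\<Sum>y\<in>{lo..c+1}. \<Sum>ys\<in>SL (Suc n) (y + 1) ?hi. Dt N (P @ R (Suc s) y # rowsR R (Suc s) ys @ S))
      = (\<Sum>y\<in>{lo..c+1}. Dt N (P @ R (Suc s) y # stair R (Suc s) (c + 1) (Suc n) @ S))"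
  proof (rule sum.cong[OF refl])
    fix y assume y: "y \<in> {lo..c+1}"
    have hi: "?hi = (c + 1) + int n" by simp
    have "(\<Sum>ys\<in>SL (Suc n) (y + 1) ?hi. Dt N (P @ R (Suc s) y # rowsR R (Suc s) ys @ S))
        = (\<Sum>ys\<in>SL (Suc n) (y + 1) ((c + 1) + int n). Dt N ((P @ [R (Suc s) y]) @ rowsR R (Suc s) ys @ S))"
      unfolding hi by simp
    also have "\<dots> = Dt N ((P @ [R (Suc s) y]) @ (\<lambda>j. R (Suc s) (c + 1) j - R (Suc s) (y + 1 - 1) j)
                   # stair R (Suc (Suc s)) (c + 1 + 1) n @ S)"
      by (rule Suc.IH) (use y Suc.prems in auto)
    also have "\<dots> = Dt N (P @ R (Suc s) y # (\<lambda>j. R (Suc s) (c + 1) j + (-1) * R (Suc s) y j)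
                   # stair R (Suc (Suc s)) (c + 1 + 1) n @ S)"
      by simp
    also have "\<dots> = Dt N (P @ R (Suc s) y # R (Suc s) (c + 1) # stair R (Suc (Suc s)) (c + 1 + 1) n @ S)"
      by (rule Dt_addnext2) (use Suc.prems in simp)
    finally show "(\<Sum>ys\<in>SL (Suc n) (y + 1) ?hi. Dt N (P @ R (Suc s) y # rowsR R (Suc s) ys @ S))
      = Dt N (P @ R (Suc s) y # stair R (Suc s) (c + 1) (Suc n) @ S)" by simp
  qed
  also have "\<dots> = Dt N (P @ (\<lambda>j. \<Sum>y\<in>{lo..c+1}. R (Suc s) y j) # stair R (Suc s) (c + 1) (Suc n) @ S)"
    by (rule Dt_sum[OF l, symmetric])
  also have "(\<lambda>j. \<Sum>y\<in>{lo..c+1}. R (Suc s) y j) = (\<lambda>j. (R s c j - R s (lo - 1) j) + 1 * R (Suc s) (c + 1) j)"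
  proof
    fix j
    have "(\<Sum>y\<in>{lo..c+1}. R (Suc s) y j) = R s (c + 1) j - R s (lo - 1) j"
      using telescope[where R=R, OF rec, of lo "c+1" s] Suc.prems by auto
    also have "R s (c + 1) j = R s c j + R (Suc s) (c + 1) j" using rec[of s "c+1" j] by simp
    finally show "(\<Sum>y\<in>{lo..c+1}. R (Suc s) y j) = (R s c j - R s (lo - 1) j) + 1 * R (Suc s) (c + 1) j" by simp
  qed
  also have "Dt N (P @ (\<lambda>j. (R s c j - R s (lo - 1) j) + 1 * R (Suc s) (c + 1) j) # stair R (Suc s) (c + 1) (Suc n) @ S)
      = Dt N (P @ (\<lambda>j. R s c j - R s (lo - 1) j) # stair R (Suc s) (c + 1) (Suc n) @ S)"
    using Dt_addnext1[of P "stair R (Suc (Suc s)) (c + 1 + 1) n @ S" N "\<lambda>j. R s c j - R s (lo - 1) j" 1 "R (Suc s) (c + 1)"]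
      Suc.prems by simp
  finally show ?case by simp
qed

lemma stair_shift:
  fixes R :: "nat \<Rightarrow> int \<Rightarrow> nat \<Rightarrow> complex" and c :: int
  assumes rec: "\<And>i y j. R i y j = R i (y - 1) j + R (Suc i) y j"
  shows "length P + n + 1 + length S = N \<Longrightarrow>
    Dt N (P @ stair R s (c + 1) n @ R (s + n) (c + int n) # S) = Dt N (P @ stair R s c n @ R (s + n) (c + int n) # S)"
proof (induction n arbitrary: P s c)
  case 0 thus ?case by simp
next
  case (Suc n)
  let ?X = "R (s + Suc n) (c + int (Suc n))"
  have X: "?X = R (Suc s + n) (c + 1 + int n)" by (simp add: add.assoc)
  have st: "stair R (Suc s) (c + 1) n @ ?X # S = R (Suc s) (c + 1) # stair R (Suc (Suc s)) (c + 1 + 1) n @ S"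
  proof -
    have "stair R (Suc s) (c + 1) n @ ?X # S = (stair R (Suc s) (c + 1) n @ [R (Suc s + n) (c + 1 + int n)]) @ S"
      unfolding X by simp
    also have "\<dots> = stair R (Suc s) (c + 1) (Suc n) @ S" by (simp only: stair_snoc)
    finally show ?thesis by simp
  qed
  have "Dt N (P @ stair R s (c + 1) (Suc n) @ ?X # S)
      = Dt N ((P @ [R s (c + 1)]) @ stair R (Suc s) (c + 1 + 1) n @ R (Suc s + n) (c + 1 + int n) # S)"
    unfolding X by simp
  also have "\<dots> = Dt N ((P @ [R s (c + 1)]) @ stair R (Suc s) (c + 1) n @ R (Suc s + n) (c + 1 + int n) # S)"
    by (rule Suc.IH) (use Suc.prems in simp)
  also have "\<dots> = Dt N (P @ R s (c + 1) # stair R (Suc s) (c + 1) n @ ?X # S)"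
    unfolding X by simp
  also have "\<dots> = Dt N (P @ (\<lambda>j. R s c j + 1 * R (Suc s) (c + 1) j) # R (Suc s) (c + 1) # stair R (Suc (Suc s)) (c + 1 + 1) n @ S)"
  proof -
    have e: "R s (c + 1) = (\<lambda>j. R s c j + 1 * R (Suc s) (c + 1) j)"
      using rec[of s "c + 1"] by (auto simp: fun_eq_iff)
    show ?thesis by (simp only: st e)
  qed
  also have "\<dots> = Dt N (P @ R s c # R (Suc s) (c + 1) # stair R (Suc (Suc s)) (c + 1 + 1) n @ S)"
    by (rule Dt_addnext1) (use Suc.prems in simp)
  also have "\<dots> = Dt N (P @ stair R s c (Suc n) @ ?X # S)"
    by (simp only: stair.simps append_Cons st)
  finally show ?case .
qed


definition RR :: "nat \<Rightarrow> nat \<Rightarrow> nat \<Rightarrow> (nat \<Rightarrow> complex) \<Rightarrow> (nat \<Rightarrow> int) \<Rightarrow> (nat \<Rightarrow> int)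
   \<Rightarrow> (nat \<Rightarrow> real) \<Rightarrow> nat \<Rightarrow> int \<Rightarrow> nat \<Rightarrow> complex" where
  "RR N L m z k a t i y j0 = (\<Sum>w\<in>(\<Pi>\<^sub>E l\<in>{1..m}. Sroots N L (z l)).
          w 1 ^ i * (w 1 + 1) powi (y - int i) * w m powi (- int (j0 + 1))
          / (\<Prod>l\<in>{2..m}. w l - w (l - 1))
          * (\<Prod>l\<in>{1..m}. Gfun N L k a t l (w l)))"

lemma DY_rows:
  assumes "length Y = N"
  shows "DY N L m z k a t Y = Dt N (rowsR (RR N L m z k a t) 0 Y)"
  unfolding DY_def Dt_def
  by (rule arg_cong[where f = det], rule eq_matI) (auto simp: nth_rowsR RR_def Let_def assms)

lemma root_nz:
  assumes "w \<in> Sroots N L z" "z \<noteq> 0" "1 \<le> N" "N < L"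
  shows "w \<noteq> 0" "w + 1 \<noteq> 0"
proof -
  have e: "w ^ N * (w + 1) ^ (L - N) = z ^ L" using assms(1) by (simp add: Sroots_def)
  show "w \<noteq> 0"
  proof
    assume "w = 0" thus False using e assms(2,3) by (simp add: power_0_left)
  qed
  show "w + 1 \<noteq> 0"
  proof
    assume "w + 1 = 0" thus False using e assms(2,4) by (simp add: power_0_left)
  qed
qed

lemma key_rec:
  fixes x u :: complex
  assumes "u \<noteq> 0" "u = x + 1"
  shows "x ^ i * u powi (y - int i) = x ^ i * u powi (y - 1 - int i) + x ^ Suc i * u powi (y - int (Suc i))"
proof -
  have "u powi (y - int i) = u powi (y - 1 - int i) * u"
    using power_int_add_1[of u "y - 1 - int i"] assms(1) by simp
  moreover have "y - int (Suc i) = y - 1 - int i" by simp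
  ultimately show ?thesis using assms(2) by (simp add: algebra_simps)
qed

lemma RR_rec:
  assumes "1 \<le> N" "N < L" "1 \<le> m" "\<forall>l\<in>{1..m}. z l \<noteq> 0"
  shows "RR N L m z k a t i y j = RR N L m z k a t i (y - 1) j + RR N L m z k a t (Suc i) y j"
  unfolding RR_def sum.distrib[symmetric]
proof (rule sum.cong[OF refl])
  fix w assume w: "w \<in> (\<Pi>\<^sub>E l\<in>{1..m}. Sroots N L (z l))"
  have w1: "w 1 \<in> Sroots N L (z 1)" using w assms(3) by (auto simp: PiE_def Pi_def)
  have u: "w 1 + 1 \<noteq> 0" using root_nz(2)[OF w1] assms by auto
  note kr = key_rec[OF u refl, of i y]
  show "w 1 ^ i * (w 1 + 1) powi (y - int i) * w m powi - int (j + 1) / (\<Prod>l = 2..m. w l - w (l - 1)) * (\<Prod>l = 1..m. Gfun N L k a t l (w l)) =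
         w 1 ^ i * (w 1 + 1) powi (y - 1 - int i) * w m powi - int (j + 1) / (\<Prod>l = 2..m. w l - w (l - 1)) * (\<Prod>l = 1..m. Gfun N L k a t l (w l)) +
         w 1 ^ Suc i * (w 1 + 1) powi (y - int (Suc i)) * w m powi - int (j + 1) / (\<Prod>l = 2..m. w l - w (l - 1)) * (\<Prod>l = 1..m. Gfun N L k a t l (w l))"
    unfolding kr by (simp add: algebra_simps add_divide_distrib)
qed

lemma Gfun_plus:
  assumes "1 \<le> l" "w \<noteq> 0" "w + 1 \<noteq> 0"
  shows "Gfun N L (\<lambda>l. k l + 1) a t l w = Gfun N L k a t l w * (if l = 1 then (w + 1) / w else 1)"
proof (cases "l = 1")
  case True
  have e1: "w powi (- (k 1 + 1)) = w powi (- k 1) / w"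
    using power_int_diff[of w "- k 1" 1] assms by simp
  have e2: "(w + 1) powi (- a 1 + (k 1 + 1)) = (w + 1) powi (- a 1 + k 1) * (w + 1)"
  proof -
    have "- a 1 + (k 1 + 1) = (- a 1 + k 1) + 1" by simp
    thus ?thesis using power_int_add_1[of "w + 1" "- a 1 + k 1"] assms by metis
  qed
  define pre where "pre = w * (w + 1) / (of_nat L * (w + of_nat N / of_nat L))"
  define E where "E = exp (complex_of_real (t 1) * w)"
  have g1: "Gfun N L (\<lambda>l. k l + 1) a t 1 w = pre * (w powi (- (k 1 + 1)) * (w + 1) powi (- a 1 + (k 1 + 1)) * E)"
    unfolding pre_def E_def Gfun_def ext0_def Let_def by simp
  have g2: "Gfun N L k a t 1 w = pre * (w powi (- k 1) * (w + 1) powi (- a 1 + k 1) * E)"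
    unfolding pre_def E_def Gfun_def ext0_def Let_def by simp
  show ?thesis unfolding True g1 g2 e1 e2 using assms by (simp add: field_simps)
next
  case False
  hence l1: "l \<noteq> 1" "l - 1 \<noteq> 0" "l \<noteq> 0" using assms by auto
  have e1: "\<And>K. w powi (- (K + 1)) = w powi (- K) / w"
    using power_int_diff[of w] assms by (simp add: algebra_simps)
  have e2: "(w + 1) powi (- A + (K + 1)) = (w + 1) powi (- A + K) * (w + 1)" for A K
  proof -
    have "- A + (K + 1) = (- A + K) + 1" by simp
    thus ?thesis using power_int_add_1[of "w + 1" "- A + K"] assms by metis
  qed
  define pre where "pre = w * (w + 1) / (of_nat L * (w + of_nat N / of_nat L))"
  define E where "E = (\<lambda>l. exp (complex_of_real (t l) * w))"
  have g1: "Gfun N L (\<lambda>l. k l + 1) a t l w = pre * (w powi (- (k l + 1)) * (w + 1) powi (- a l + (k l + 1)) * E l)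
     / (w powi (- (k (l - 1) + 1)) * (w + 1) powi (- a (l - 1) + (k (l - 1) + 1)) * E (l - 1))"
    unfolding pre_def E_def Gfun_def ext0_def Let_def using l1 by simp
  have g2: "Gfun N L k a t l w = pre * (w powi (- k l) * (w + 1) powi (- a l + k l) * E l)
     / (w powi (- k (l - 1)) * (w + 1) powi (- a (l - 1) + k (l - 1)) * E (l - 1))"
    unfolding pre_def E_def Gfun_def ext0_def Let_def using l1 by simp
  have nz: "w powi (- k (l - 1)) \<noteq> 0" "(w + 1) powi (- a (l - 1) + k (l - 1)) \<noteq> 0" "E (l - 1) \<noteq> 0"
    using assms by (auto simp: E_def)
  have r: "X / w * (Y * (w + 1)) * Z = (X * Y * Z) * ((w + 1) / w)" for X Y Z :: complex
    using assms by (simp add: field_simps)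
  have q: "(w + 1) / w \<noteq> 0" using assms by simp
  have "Gfun N L (\<lambda>l. k l + 1) a t l w = pre * ((w powi (- k l) * (w + 1) powi (- a l + k l) * E l) * ((w + 1) / w))
     / ((w powi (- k (l - 1)) * (w + 1) powi (- a (l - 1) + k (l - 1)) * E (l - 1)) * ((w + 1) / w))"
    unfolding g1 e1 e2 r ..
  also have "\<dots> = Gfun N L k a t l w"
    unfolding g2 using q by (simp only: mult.assoc[symmetric] nonzero_mult_divide_mult_cancel_right not_False_eq_True)
  finally show ?thesis using l1 by simp
qed

lemma W_nz:
  assumes "w \<in> (\<Pi>\<^sub>E l\<in>{1..m}. Sroots N L (z l))" "l \<in> {1..m}"
    "1 \<le> N" "N < L" "\<forall>l\<in>{1..m}. z l \<noteq> 0"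
  shows "w l \<noteq> 0" "w l + 1 \<noteq> 0"
proof -
  have "w l \<in> Sroots N L (z l)" using assms(1,2) by (auto simp: PiE_def Pi_def)
  thus "w l \<noteq> 0" "w l + 1 \<noteq> 0" using root_nz assms(2-5) by auto
qed

lemma Gp_plus:
  assumes "w \<in> (\<Pi>\<^sub>E l\<in>{1..m}. Sroots N L (z l))" "1 \<le> m"
    "1 \<le> N" "N < L" "\<forall>l\<in>{1..m}. z l \<noteq> 0"
  shows "(\<Prod>l\<in>{1..m}. Gfun N L (\<lambda>l. k l + 1) a t l (w l))
       = (\<Prod>l\<in>{1..m}. Gfun N L k a t l (w l)) * ((w 1 + 1) / w 1)"
proof -
  have "(\<Prod>l\<in>{1..m}. Gfun N L (\<lambda>l. k l + 1) a t l (w l))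
      = (\<Prod>l\<in>{1..m}. Gfun N L k a t l (w l) * (if l = 1 then (w l + 1) / w l else 1))"
    by (rule prod.cong[OF refl], rule Gfun_plus) (use W_nz[OF assms(1) _ assms(3-5)] in auto)
  also have "\<dots> = (\<Prod>l\<in>{1..m}. Gfun N L k a t l (w l)) * (\<Prod>l\<in>{1..m}. (if l = 1 then (w l + 1) / w l else 1))"
    by (rule prod.distrib)
  also have "(\<Prod>l\<in>{1..m}. (if l = 1 then (w l + 1) / w l else 1)) = (w 1 + 1) / w 1"
    using assms(2) by (simp add: prod.delta)
  finally show ?thesis .
qed

lemma Ystep_nth: "i < N \<Longrightarrow> Ystep N ! i = 1 - int N + int i"
  by (simp add: Ystep_def del: upt_Suc)

lemma length_Ystep[simp]: "length (Ystep N) = N" by (simp add: Ystep_def)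

lemma alg: "(x::complex) \<noteq> 0 \<Longrightarrow> x * X * p * V * (G * (u / x)) / D = X * (p * u) * V * G / D"
  by (cases "D = 0") (simp_all add: field_simps)

lemma DY_plus:
  assumes "1 \<le> m" "1 \<le> N" "N < L" "\<forall>l\<in>{1..m}. z l \<noteq> 0"
  shows "DY N L m z (\<lambda>l. k l + 1) a t (Ystep N) = Dt N (stair (RR N L m z k a t) 0 (1 - int N) N)"
  unfolding DY_def Dt_def
proof (rule arg_cong[where f = det], rule eq_matI)
  fix i j assume i: "i < dim_row (mat N N (\<lambda>(i, j). (stair (RR N L m z k a t) 0 (1 - int N) N ! i) j))"
    and j: "j < dim_col (mat N N (\<lambda>(i, j). (stair (RR N L m z k a t) 0 (1 - int N) N ! i) j))"
  hence i: "i < N" and j: "j < N" by auto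
  show "mat N N (\<lambda>(i0, j0). let i = i0 + 1; j = j0 + 1 in
       (\<Sum>w\<in>(\<Pi>\<^sub>E l\<in>{1..m}. Sroots N L (z l)).
          w 1 ^ i * (w 1 + 1) powi (Ystep N ! (i - 1) - int i) * w m powi (- int j)
          / (\<Prod>l\<in>{2..m}. w l - w (l - 1))
          * (\<Prod>l\<in>{1..m}. Gfun N L (\<lambda>l. k l + 1) a t l (w l)))) $$ (i, j)
     = mat N N (\<lambda>(i, j). (stair (RR N L m z k a t) 0 (1 - int N) N ! i) j) $$ (i, j)"
    using i j
    apply (simp add: nth_stair RR_def Ystep_nth Let_def)
  proof (rule sum.cong[OF refl])
    fix w assume w0: "w \<in> (\<Pi>\<^sub>E l\<in>{Suc 0..m}. Sroots N L (z l))"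
    have w: "w \<in> (\<Pi>\<^sub>E l\<in>{1..m}. Sroots N L (z l))" using w0 by simp
    have x: "w (Suc 0) \<noteq> 0" and u: "w (Suc 0) + 1 \<noteq> 0" using W_nz[OF w _ assms(2-4)] assms(1) by auto
    have e: "(w (Suc 0) + 1) powi (1 - int N) = (w (Suc 0) + 1) powi (- int N) * (w (Suc 0) + 1)"
      using power_int_add_1[of "w (Suc 0) + 1" "- int N"] u by simp
    have g: "(\<Prod>l = Suc 0..m. Gfun N L (\<lambda>l. k l + 1) a t l (w l)) = (\<Prod>l = Suc 0..m. Gfun N L k a t l (w l)) * ((w (Suc 0) + 1) / w (Suc 0))"
      using Gp_plus[OF w assms(1-4), of k a t] by simp
    show "w (Suc 0) * w (Suc 0) ^ i * (w (Suc 0) + 1) powi - int N * w m powi (- 1 - int j) *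
            (\<Prod>l = Suc 0..m. Gfun N L (\<lambda>l. k l + 1) a t l (w l)) / (\<Prod>l = 2..m. w l - w (l - Suc 0)) =
          w (Suc 0) ^ i * (w (Suc 0) + 1) powi (1 - int N) * w m powi (- 1 - int j) *
            (\<Prod>l = Suc 0..m. Gfun N L k a t l (w l)) / (\<Prod>l = 2..m. w l - w (l - Suc 0))"
      unfolding e g by (rule alg[OF x])
  qed
qed (auto)


lemma rowsR_Ystep: "rowsR R 0 (Ystep N) = stair R 1 (1 - int N) N"
  by (rule nth_equalityI) (auto simp: nth_rowsR nth_stair Ystep_nth)

lemma YN_SL: "YN N L = SL N (1 - int L) 0"
  unfolding YN_def SL_def by auto

lemma R0L:
  assumes "1 \<le> N" "N < L" "1 \<le> m" "\<forall>l\<in>{1..m}. z l \<noteq> 0"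
  shows "RR N L m z k a t 0 (- int L) = (\<lambda>j. z 1 powi (- int L) * RR N L m z k a t N 0 j)"
proof
  fix j
  show "RR N L m z k a t 0 (- int L) j = z 1 powi (- int L) * RR N L m z k a t N 0 j"
    unfolding RR_def sum_distrib_left
  proof (rule sum.cong[OF refl])
    fix w assume w: "w \<in> (\<Pi>\<^sub>E l\<in>{1..m}. Sroots N L (z l))"
    have w1: "w 1 \<in> Sroots N L (z 1)" using w assms(3) by (auto simp: PiE_def Pi_def)
    have x: "w 1 \<noteq> 0" and u: "w 1 + 1 \<noteq> 0" using W_nz[OF w _ assms(1,2,4)] assms(3) by auto
    have zL: "z 1 ^ L = w 1 ^ N * (w 1 + 1) ^ (L - N)" using w1 by (simp add: Sroots_def)
    have uL: "(w 1 + 1) ^ L = (w 1 + 1) ^ N * (w 1 + 1) ^ (L - N)"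
      using assms(2) by (simp flip: power_add)
    have key: "(w 1 + 1) powi (- int L) = z 1 powi (- int L) * (w 1 ^ N * (w 1 + 1) powi (- int N))"
      unfolding power_int_minus power_int_of_nat zL uL using x u by (simp add: field_simps)
    show "w 1 ^ 0 * (w 1 + 1) powi (- int L - int 0) * w m powi - int (j + 1) / (\<Prod>l = 2..m. w l - w (l - 1)) *
          (\<Prod>l = 1..m. Gfun N L k a t l (w l)) =
          z 1 powi - int L * (w 1 ^ N * (w 1 + 1) powi (0 - int N) * w m powi - int (j + 1) / (\<Prod>l = 2..m. w l - w (l - 1)) *
          (\<Prod>l = 1..m. Gfun N L k a t l (w l)))"
      using key by simp
  qed
qed

theorem lemma11p7:
  fixes N L m :: nat and z :: "nat \<Rightarrow> complex" and k a :: "nat \<Rightarrow> int" and t :: "nat \<Rightarrow> real"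
  assumes "1 \<le> N" and "N < L" and "1 \<le> m"
    and "\<forall>l\<in>{1..m}. t l \<ge> 0"
    and "\<forall>l\<in>{1..m}. z l \<noteq> 0"
    and "0 < norm (z m)"
    and "\<forall>l\<in>{1..<m}. norm (z (l + 1)) < norm (z l)"
  shows "(\<Sum>Y\<in>YN N L. DY N L m z k a t Y)
         = DY N L m z (\<lambda>l. k l + 1) a t (Ystep N)
           - (-1) ^ (N - 1) * z 1 powi (- int L) * DY N L m z k a t (Ystep N)"
proof -
  define R where "R = RR N L m z k a t"
  have rec: "\<And>i y j. R i y j = R i (y - 1) j + R (Suc i) y j"
    unfolding R_def using RR_rec[OF assms(1,2,3,5)] by blast
  obtain n where n: "N = Suc n" using assms(1) by (cases N) auto
  define c where "c = 1 - int N"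
  have cn: "c + int n = 0" unfolding c_def n by simp
  have "(\<Sum>Y\<in>YN N L. DY N L m z k a t Y) = (\<Sum>Y\<in>SL (Suc n) (1 - int L) (c + int n). Dt N ([] @ rowsR R 0 Y @ []))"
    unfolding YN_SL cn n[symmetric] R_def
    by (rule sum.cong[OF refl]) (auto simp: SL_def DY_rows)
  also have "\<dots> = Dt N ([] @ (\<lambda>j. R 0 c j - R 0 (1 - int L - 1) j) # stair R (Suc 0) (c + 1) n @ [])"
    by (rule main_claim[where R=R, OF rec]) (use assms(2) n in \<open>auto simp: c_def\<close>)
  also have "\<dots> = Dt N (R 0 c # stair R (Suc 0) (c + 1) n) - Dt N (R 0 (- int L) # stair R (Suc 0) (c + 1) n)"
    using Dt_diff[of "[]" "stair R (Suc 0) (c + 1) n" N] n by simp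
  also have "Dt N (R 0 c # stair R (Suc 0) (c + 1) n) = DY N L m z (\<lambda>l. k l + 1) a t (Ystep N)"
    by (subst DY_plus[OF assms(3,1,2,5)]) (simp add: n c_def R_def)
  also have "Dt N (R 0 (- int L) # stair R (Suc 0) (c + 1) n)
      = z 1 powi (- int L) * Dt N (R N 0 # stair R (Suc 0) (c + 1) n)"
    using R0L[OF assms(1,2,3,5), of k a t] Dt_scale[of "[]" "stair R (Suc 0) (c + 1) n" N "z 1 powi (- int L)" "R N 0"] n
    unfolding R_def by simp
  also have "Dt N (R N 0 # stair R (Suc 0) (c + 1) n) = (-1) ^ n * Dt N (stair R (Suc 0) (c + 1) n @ [R N 0])"
    using Dt_move[of "[]" "stair R (Suc 0) (c + 1) n" "[]" N "R N 0"] n by simp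
  also have "Dt N (stair R (Suc 0) (c + 1) n @ [R N 0]) = Dt N ([] @ stair R 1 (c + 1) n @ R (1 + n) (c + int n) # [])"
    using cn n by simp
  also have "\<dots> = Dt N ([] @ stair R 1 c n @ R (1 + n) (c + int n) # [])"
    by (rule stair_shift[where R=R, OF rec]) (use n in simp)
  also have "\<dots> = Dt N (stair R 1 c N)"
    unfolding n stair_snoc by simp
  also have "\<dots> = DY N L m z k a t (Ystep N)"
    unfolding DY_rows[OF length_Ystep] rowsR_Ystep c_def R_def ..
  finally show ?thesis using n by simp
qed

end
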